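(* Let $f:\mathbb{R}^d\times\mathcal{X}\to\mathbb{R}$ be differentiable in $\theta$, with $\mathcal{X}$ a subset of a Euclidean space and $\sup_{x\in\mathcal{X}}\Vert x\Vert\le D<\infty$, and assume (A1): there are $K_1,K_2>0$ with $\Vert\nabla f(\theta,x)-\nabla f(\hat\theta,\hat x)\Vert\le K_1\Vert\theta-\hat\theta\Vert+K_2\Vert x-\hat x\Vert(\Vert\theta\Vert+\Vert\hat\theta\Vert+1)$ for all $\theta,\hat\theta\in\mathbb{R}^d$, $x,\hat x\in\mathcal{X}$. Let $X_n=(x_1,\dots,x_n)$, $\hat X_n=(\hat x_1,\dots,\hat x_n)\in\mathcal{X}^n$ differ in at most one index, $b\in\{1,\dots,n\}$, $\eta>0$, and let $P,\hat P$ be the transition kernels of the SGD chains $\theta_k=\theta_{k-1}-\frac\eta b\sum_{i\in\Omega_k}\nabla f(\theta_{k-1},x_i)$ and $\hat\theta_k=\hat\theta_{k-1}-\frac\eta b\sum_{i\in\Omega_k}\nabla f(\hat\theta_{k-1},\hat x_i)$, where $(\Omega_k)$ are i.i.d. uniformly random $b$-subsets of $\{1,\dots,n\}$. Let $\hat\theta_*$ be a minimizer of $\hat F(\theta,\hat X_n):=\frac1n\sum_{i=1}^nf(\theta,\hat x_i)$ and $\hat V(\theta)=1+\Vert\theta-\hat\theta_*\Vert^2$. Then $$\sup_{\theta\in\mathbb{R}^d}\frac{\mathcal{W}_1(\delta_\theta P,\delta_\theta\hat P)}{\hat V(\theta)}\le\frac{4DK_2\eta}{n}\left(2\Vert\h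at\theta_*\Vert+1\right).$$
   Context: $\delta_\theta P=P(\theta,\cdot)$; $\mathcal{W}_1$ is the 1-Wasserstein distance. *)

theory Defs
  imports "HOL-Probability.Probability"
begin

definition couplings :: "'a pmf \<Rightarrow> 'a pmf \<Rightarrow> ('a \<times> 'a) pmf set" where
  "couplings p q = {c. map_pmf fst c = p \<and> map_pmf snd c = q}"

definition W1 :: "'a::metric_space pmf \<Rightarrow> 'a pmf \<Rightarrow> real" where
  "W1 p q = (INF c \<in> couplings p q. measure_pmf.expectation c (\<lambda>(u, v). dist u v))"

definition minibatch :: "nat \<Rightarrow> nat \<Rightarrow> nat set pmf" where
  "minibatch n b = pmf_of_set {\<Omega>. \<Omega> \<subseteq> {1..n} \<and> card \<Omega> = b}"

text \<open>One-step transition kernel of minibatch SGD started at theta (i.e. \<delta>_\<theta> P):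
  theta - (eta/b) * sum over the random batch of the gradients at the data points xs i.\<close>
definition sgd_kernel ::
  "('a::euclidean_space \<Rightarrow> 'b \<Rightarrow> 'a) \<Rightarrow> (nat \<Rightarrow> 'b) \<Rightarrow> nat \<Rightarrow> nat \<Rightarrow> real \<Rightarrow> 'a \<Rightarrow> 'a pmf" where
  "sgd_kernel gf xs n b \<eta> \<theta> =
     map_pmf (\<lambda>\<Omega>. \<theta> - (\<eta> / real b) *\<^sub>R (\<Sum>i\<in>\<Omega>. gf \<theta> (xs i))) (minibatch n b)"

end

theory Submission
  imports Defs
begin


lemma card_contain:
  assumes i: "i \<in> {1..n}" and b: "1 \<le> b"
  shows "card {\<Omega>. (\<Omega> \<subseteq> {1..n} \<and> card \<Omega> = b) \<and> i \<in> \<Omega>} = (n - 1) choose (b - 1)"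
proof -
  have fin: "finite ({1..n} - {i})" by simp
  have cA: "card ({1..n} - {i}) = n - 1" using i by simp
  have "bij_betw (\<lambda>\<Omega>. \<Omega> - {i}) {\<Omega>. (\<Omega> \<subseteq> {1..n} \<and> card \<Omega> = b) \<and> i \<in> \<Omega>}
          {B. B \<subseteq> {1..n} - {i} \<and> card B = b - 1}"
  proof (rule bij_betwI[where g="insert i"])
    show "(\<lambda>\<Omega>. \<Omega> - {i}) \<in> {\<Omega>. (\<Omega> \<subseteq> {1..n} \<and> card \<Omega> = b) \<and> i \<in> \<Omega>} \<rightarrow> {B. B \<subseteq> {1..n} - {i} \<and> card B = b - 1}"
    proof
      fix \<Omega> assume "\<Omega> \<in> {\<Omega>. (\<Omega> \<subseteq> {1..n} \<and> card \<Omega> = b) \<and> i \<in> \<Omega>}"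
      then have h: "\<Omega> \<subseteq> {1..n}" "card \<Omega> = b" "i \<in> \<Omega>" by auto
      have "finite \<Omega>" using h(1) finite_subset by blast
      then show "\<Omega> - {i} \<in> {B. B \<subseteq> {1..n} - {i} \<and> card B = b - 1}" using h by auto
    qed
    show "insert i \<in> {B. B \<subseteq> {1..n} - {i} \<and> card B = b - 1} \<rightarrow> {\<Omega>. (\<Omega> \<subseteq> {1..n} \<and> card \<Omega> = b) \<and> i \<in> \<Omega>}"
    proof
      fix B assume "B \<in> {B. B \<subseteq> {1..n} - {i} \<and> card B = b - 1}"
      then have h: "B \<subseteq> {1..n} - {i}" "card B = b - 1" by auto
      have "finite B" using h(1) finite_subset by blast
      moreover have "i \<notin> B" using h(1) by auto
      ultimately show "insert i B \<in> {\<Omega>. (\<Omega> \<subseteq> {1..n} \<and> card \<Omega> = b) \<and> i \<in> \<Omega>}" using h i b by auto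
    qed
  qed auto
  then have "card {\<Omega>. (\<Omega> \<subseteq> {1..n} \<and> card \<Omega> = b) \<and> i \<in> \<Omega>} = card {B. B \<subseteq> {1..n} - {i} \<and> card B = b - 1}"
    by (rule bij_betw_same_card)
  also have "\<dots> = (n - 1) choose (b - 1)" using n_subsets[OF fin] cA by simp
  finally show ?thesis .
qed

lemma arith_aux:
  fixes b c a n \<eta> s :: real
  assumes "b * c = n * a" "a > 0" "b > 0" "c > 0"
  shows "(\<eta> / b) * (a * s) / c = \<eta> / n * s"
proof -
  have n: "n = b * c / a" using assms by (simp add: field_simps)
  show ?thesis unfolding n using assms by (simp add: field_simps)
qed

lemma expect_batch:
  fixes g :: "nat \<Rightarrow> real"
  assumes b: "1 \<le> b" "b \<le> n"
  shows "(\<Sum>\<Omega>\<in>{\<Omega>. \<Omega> \<subseteq> {1..n} \<and> card \<Omega> = b}. \<Sum>i\<in>\<Omega>. g i)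
       = real ((n - 1) choose (b - 1)) * (\<Sum>i=1..n. g i)"
proof -
  let ?S = "{\<Omega>. \<Omega> \<subseteq> {1..n} \<and> card \<Omega> = b}"
  have finS: "finite ?S" by (rule finite_subset[of _ "Pow {1..n}"]) auto
  have "(\<Sum>\<Omega>\<in>?S. \<Sum>i\<in>\<Omega>. g i) = (\<Sum>\<Omega>\<in>?S. \<Sum>i\<in>{i. i \<in> {1..n} \<and> i \<in> \<Omega>}. g i)"
    by (rule sum.cong) (auto intro!: sum.cong)
  also have "\<dots> = (\<Sum>i\<in>{1..n}. \<Sum>\<Omega>\<in>{\<Omega>. \<Omega> \<in> ?S \<and> i \<in> \<Omega>}. g i)"
    by (rule sum.swap_restrict) (use finS in auto)
  also have "\<dots> = (\<Sum>i\<in>{1..n}. real ((n - 1) choose (b - 1)) * g i)"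
  proof (rule sum.cong)
    fix i assume i: "i \<in> {1..n}"
    have "{\<Omega>. \<Omega> \<in> ?S \<and> i \<in> \<Omega>} = {\<Omega>. (\<Omega> \<subseteq> {1..n} \<and> card \<Omega> = b) \<and> i \<in> \<Omega>}" by auto
    then show "(\<Sum>\<Omega>\<in>{\<Omega>. \<Omega> \<in> ?S \<and> i \<in> \<Omega>}. g i) = real ((n - 1) choose (b - 1)) * g i"
      using card_contain[OF i b(1)] by simp
  qed simp
  finally show ?thesis by (simp add: sum_distrib_left)
qed

theorem lemmaC3:
  fixes f :: "'a::euclidean_space \<Rightarrow> 'b::euclidean_space \<Rightarrow> real"
    and gf :: "'a \<Rightarrow> 'b \<Rightarrow> 'a"
    and X :: "'b set"
    and D K1 K2 \<eta> :: real
    and n b :: nat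
    and xs xhs :: "nat \<Rightarrow> 'b"
    and \<theta>s :: 'a
  assumes grad: "\<And>\<theta> x. x \<in> X \<Longrightarrow> ((\<lambda>t. f t x) has_derivative (\<lambda>h. gf \<theta> x \<bullet> h)) (at \<theta>)"
    and bounded: "\<And>x. x \<in> X \<Longrightarrow> norm x \<le> D"
    and K1: "K1 > 0" and K2: "K2 > 0"
    and A1: "\<And>\<theta> \<theta>' x x'. x \<in> X \<Longrightarrow> x' \<in> X \<Longrightarrow>
               norm (gf \<theta> x - gf \<theta>' x') \<le> K1 * norm (\<theta> - \<theta>') + K2 * norm (x - x') * (norm \<theta> + norm \<theta>' + 1)"
    and xs_in: "\<And>i. i \<in> {1..n} \<Longrightarrow> xs i \<in> X"
    and xhs_in: "\<And>i. i \<in> {1..n} \<Longrightarrow> xhs i \<in> X"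
    and differ: "card {i \<in> {1..n}. xs i \<noteq> xhs i} \<le> 1"
    and b: "1 \<le> b" "b \<le> n"
    and eta: "\<eta> > 0"
    and minimizer: "\<And>\<theta>. (1 / real n) * (\<Sum>i=1..n. f \<theta>s (xhs i)) \<le> (1 / real n) * (\<Sum>i=1..n. f \<theta> (xhs i))"
  shows "\<forall>\<theta>. W1 (sgd_kernel gf xs n b \<eta> \<theta>) (sgd_kernel gf xhs n b \<eta> \<theta>) / (1 + (norm (\<theta> - \<theta>s))\<^sup>2)
           \<le> 4 * D * K2 * \<eta> / real n * (2 * norm \<theta>s + 1)"
proof
  fix \<theta> :: 'a
  let ?S = "{\<Omega>. \<Omega> \<subseteq> {1..n} \<and> card \<Omega> = b}"
  have finS: "finite ?S" by (rule finite_subset[of _ "Pow {1..n}"]) auto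
  obtain B where B: "B \<subseteq> {1..n}" "card B = b"
    using obtain_subset_with_card_n[of b "{1..n}"] b by auto
  then have neS: "?S \<noteq> {}" by auto
  have cardS: "card ?S = n choose b" using n_subsets[of "{1..n}" b] by simp
  have npos: "n > 0" using b by simp
  have binom: "real b * real (n choose b) = real n * real ((n - 1) choose (b - 1))"
    using times_binomial_minus1_eq[of b n] b by (metis of_nat_mult less_le_trans zero_less_one)
  have cS_pos: "real (n choose b) > 0" using b by simp
  have one: "1 \<in> {1..n}" using b by simp
  have D0: "0 \<le> D" using bounded[OF xs_in[OF one]] norm_ge_zero[of "xs 1"] by linarith
  define C where "C = K2 * (2 * D) * (2 * norm \<theta> + 1)"
  have C0: "0 \<le> C" unfolding C_def using K2 D0 by simp
  define g where "g i = norm (gf \<theta> (xs i) - gf \<theta> (xhs i))" for i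
  have g0: "g i \<ge> 0" for i unfolding g_def by simp
  have gC: "g i \<le> C" if i: "i \<in> {1..n}" for i
  proof -
    have "g i \<le> K1 * norm (\<theta> - \<theta>) + K2 * norm (xs i - xhs i) * (norm \<theta> + norm \<theta> + 1)"
      unfolding g_def by (rule A1[OF xs_in[OF i] xhs_in[OF i]])
    also have "\<dots> = K2 * norm (xs i - xhs i) * (2 * norm \<theta> + 1)" by simp
    also have "\<dots> \<le> K2 * (2 * D) * (2 * norm \<theta> + 1)"
    proof -
      have "norm (xs i - xhs i) \<le> norm (xs i) + norm (xhs i)" by (rule norm_triangle_ineq4)
      also have "\<dots> \<le> 2 * D" using bounded[OF xs_in[OF i]] bounded[OF xhs_in[OF i]] by simp
      finally show ?thesis using K2 by (intro mult_right_mono mult_left_mono) auto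
    qed
    finally show ?thesis unfolding C_def .
  qed
  have sumg: "(\<Sum>i=1..n. g i) \<le> C"
  proof -
    let ?J = "{i \<in> {1..n}. xs i \<noteq> xhs i}"
    have "(\<Sum>i=1..n. g i) = (\<Sum>i\<in>?J. g i)"
      by (rule sum.mono_neutral_right) (auto simp: g_def)
    also have "\<dots> \<le> (\<Sum>i\<in>?J. C)" by (rule sum_mono) (use gC in auto)
    also have "\<dots> = real (card ?J) * C" by simp
    also have "\<dots> \<le> 1 * C" using differ C0 by (intro mult_right_mono) auto
    finally show ?thesis by simp
  qed
  define c where "c = map_pmf (\<lambda>\<Omega>. (\<theta> - (\<eta> / real b) *\<^sub>R (\<Sum>i\<in>\<Omega>. gf \<theta> (xs i)),
                                   \<theta> - (\<eta> / real b) *\<^sub>R (\<Sum>i\<in>\<Omega>. gf \<theta> (xhs i)))) (minibatch n b)"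
  have cc: "c \<in> couplings (sgd_kernel gf xs n b \<eta> \<theta>) (sgd_kernel gf xhs n b \<eta> \<theta>)"
    unfolding couplings_def c_def sgd_kernel_def by (simp add: pmf.map_comp o_def)
  have "W1 (sgd_kernel gf xs n b \<eta> \<theta>) (sgd_kernel gf xhs n b \<eta> \<theta>)
        \<le> measure_pmf.expectation c (\<lambda>(u, v). dist u v)"
    unfolding W1_def
  proof (rule cINF_lower[OF _ cc])
    show "bdd_below ((\<lambda>c. measure_pmf.expectation c (\<lambda>(u, v). dist u v)) `
            couplings (sgd_kernel gf xs n b \<eta> \<theta>) (sgd_kernel gf xhs n b \<eta> \<theta>))"
      by (rule bdd_belowI[of _ 0]) (auto intro!: integral_nonneg_AE)
  qed
  also have "measure_pmf.expectation c (\<lambda>(u, v). dist u v)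
      = measure_pmf.expectation (pmf_of_set ?S)
          (\<lambda>\<Omega>. norm ((\<eta> / real b) *\<^sub>R (\<Sum>i\<in>\<Omega>. (gf \<theta> (xs i) - gf \<theta> (xhs i)))))"
    unfolding c_def minibatch_def
    by (simp add: dist_norm sum_subtractf scaleR_diff_right norm_minus_commute)
  also have "\<dots> = (\<Sum>\<Omega>\<in>?S. norm ((\<eta> / real b) *\<^sub>R (\<Sum>i\<in>\<Omega>. (gf \<theta> (xs i) - gf \<theta> (xhs i))))) / real (card ?S)"
    by (rule integral_pmf_of_set[OF neS finS])
  also have "\<dots> \<le> (\<Sum>\<Omega>\<in>?S. (\<eta> / real b) * (\<Sum>i\<in>\<Omega>. g i)) / real (card ?S)"
  proof (intro divide_right_mono sum_mono)
    fix \<Omega> assume "\<Omega> \<in> ?S"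
    have "norm ((\<eta> / real b) *\<^sub>R (\<Sum>i\<in>\<Omega>. (gf \<theta> (xs i) - gf \<theta> (xhs i))))
        = (\<eta> / real b) * norm (\<Sum>i\<in>\<Omega>. (gf \<theta> (xs i) - gf \<theta> (xhs i)))" using eta by simp
    also have "\<dots> \<le> (\<eta> / real b) * (\<Sum>i\<in>\<Omega>. g i)"
      unfolding g_def using eta by (intro mult_left_mono norm_sum) auto
    finally show "norm ((\<eta> / real b) *\<^sub>R (\<Sum>i\<in>\<Omega>. (gf \<theta> (xs i) - gf \<theta> (xhs i)))) \<le> (\<eta> / real b) * (\<Sum>i\<in>\<Omega>. g i)" .
  qed simp
  also have "\<dots> = (\<eta> / real b) * (real ((n - 1) choose (b - 1)) * (\<Sum>i=1..n. g i)) / real (n choose b)"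
  proof -
    have "(\<Sum>\<Omega>\<in>?S. (\<eta> / real b) * (\<Sum>i\<in>\<Omega>. g i)) = (\<eta> / real b) * (real ((n - 1) choose (b - 1)) * (\<Sum>i=1..n. g i))"
      using expect_batch[OF b, of g] by (simp only: sum_distrib_left[symmetric])
    then show ?thesis using cardS by simp
  qed
  also have "\<dots> = \<eta> / real n * (\<Sum>i=1..n. g i)"
  proof -
    have c1: "real ((n - 1) choose (b - 1)) > 0" using b by simp
    have bp: "real b > 0" using b by simp
    show ?thesis by (rule arith_aux[OF binom c1 bp cS_pos])
  qed
  also have "\<dots> \<le> \<eta> / real n * C" using sumg eta npos by (intro mult_left_mono) auto
  finally have W: "W1 (sgd_kernel gf xs n b \<eta> \<theta>) (sgd_kernel gf xhs n b \<eta> \<theta>) \<le> \<eta> / real n * C" .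
  define r where "r = norm (\<theta> - \<theta>s)"
  have r0: "r \<ge> 0" unfolding r_def by simp
  have nt: "norm \<theta> \<le> norm \<theta>s + r" unfolding r_def using norm_triangle_ineq[of "\<theta> - \<theta>s" \<theta>s] by simp
  have key: "2 * (2 * norm \<theta> + 1) \<le> 4 * (2 * norm \<theta>s + 1) * (1 + r\<^sup>2)"
  proof -
    have "2 * r \<le> 1 + r\<^sup>2" proof -
      have "0 \<le> (r - 1)\<^sup>2" by simp
      then show ?thesis by (simp add: power2_diff)
    qed
    have a: "2 * norm \<theta>s + 1 \<le> (2 * norm \<theta>s + 1) * (1 + r\<^sup>2)"
      using mult_left_mono[of 1 "1 + r\<^sup>2" "2 * norm \<theta>s + 1"] by simp
    have b2: "1 + r\<^sup>2 \<le> (2 * norm \<theta>s + 1) * (1 + r\<^sup>2)"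
      using mult_right_mono[of 1 "2 * norm \<theta>s + 1" "1 + r\<^sup>2"] by simp
    obtain P where P: "P = (2 * norm \<theta>s + 1) * (1 + r\<^sup>2)" by blast
    have e: "4 * (2 * norm \<theta>s + 1) * (1 + r\<^sup>2) = 4 * P" unfolding P by simp
    have a': "2 * norm \<theta>s + 1 \<le> P" "1 + r\<^sup>2 \<le> P" using a b2 unfolding P by auto
    have "2 * (2 * norm \<theta> + 1) \<le> 2 * (2 * norm \<theta>s + 1) + 2 * (2 * r)" using nt by (smt (verit))
    also have "\<dots> \<le> 2 * (2 * norm \<theta>s + 1) + 2 * (1 + r\<^sup>2)" using \<open>2 * r \<le> 1 + r\<^sup>2\<close> by (smt (verit))
    also have "\<dots> \<le> 2 * P + 2 * P" using a' by (smt (verit))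
    finally show ?thesis unfolding e by (smt (verit))
  qed
  have pos: "1 + r\<^sup>2 > 0" by (simp add: add_pos_nonneg)
  have "\<eta> / real n * C \<le> 4 * D * K2 * \<eta> / real n * (2 * norm \<theta>s + 1) * (1 + r\<^sup>2)"
  proof -
    have "\<eta> / real n * C = (D * K2 * \<eta> / real n) * (2 * (2 * norm \<theta> + 1))" unfolding C_def by (simp add: algebra_simps)
    also have "\<dots> \<le> (D * K2 * \<eta> / real n) * (4 * (2 * norm \<theta>s + 1) * (1 + r\<^sup>2))"
      using key D0 K2 eta npos by (intro mult_left_mono) auto
    also have "\<dots> = 4 * D * K2 * \<eta> / real n * (2 * norm \<theta>s + 1) * (1 + r\<^sup>2)"
      by (simp add: field_simps)
    finally show ?thesis .
  qed
  with W have "W1 (sgd_kernel gf xs n b \<eta> \<theta>) (sgd_kernel gf xhs n b \<eta> \<theta>) \<le> 4 * D * K2 * \<eta> / real n * (2 * norm \<theta>s + 1) * (1 + r\<^sup>2)"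
    by linarith
  then show "W1 (sgd_kernel gf xs n b \<eta> \<theta>) (sgd_kernel gf xhs n b \<eta> \<theta>) / (1 + (norm (\<theta> - \<theta>s))\<^sup>2)
           \<le> 4 * D * K2 * \<eta> / real n * (2 * norm \<theta>s + 1)"
    using pos unfolding r_def[symmetric] by (simp add: divide_le_eq)
qed

end
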